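(* In the setting below, if $g(x)$ is self-reciprocal and $\gcd(t_{22}(x),g_{12}(x))=1$, then $$\gcd\big(g_{11}'(x),\ g_{11}(x)\bar g_{11}(x)+g_{12}(x)\bar g_{12}(x)\big)=1.$$
   Context: Let $q$ be a prime power, $F=\mathbb{F}_q$, $m\ge1$ with $\gcd(q,m)=1$. For a nonzero polynomial $f$ of degree $k$, $f^*(x)=x^kf(x^{-1})$; $f$ is self-reciprocal if $f^*=\alpha f$ for some $\alpha\in F$. For a polynomial $f$ of degree at most $m$, $\bar f(x)=x^m f(x^{-1})$. Let $g_{11},g_{12}\in F[x]$ with $g_{11}\mid x^m-1$ and $\deg g_{12}<m$. Let $g=\gcd(g_{11},g_{12})$, $g_{11}=g\,g_{11}'$, $g_{22}=(x^m-1)/g_{11}'$, $g_{22}=g\,g_{22}'$, $r_{22}=\gcd(g_{22}',g_{22}'^* )$, $t_{22}=g_{22}'/r_{22}$. *)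

theory Defs
  imports "HOL-Computational_Algebra.Computational_Algebra"
begin

text \<open>Reciprocal f^*(x) = x^(deg f) f(1/x): this is the library's reflect_poly.
  Self-reciprocal: f nonzero and f^* = alpha f for some alpha in F.\<close>
definition self_reciprocal :: "'a::field poly \<Rightarrow> bool" where
  "self_reciprocal f \<longleftrightarrow> f \<noteq> 0 \<and> (\<exists>\<alpha>. reflect_poly f = smult \<alpha> f)"

text \<open>bar f(x) = x^m f(1/x) for deg f \<le> m.\<close>
definition bar_poly :: "nat \<Rightarrow> 'a::field poly \<Rightarrow> 'a poly" where
  "bar_poly m f = monom 1 (m - degree f) * reflect_poly f"

end

theory Submission
  imports Defs
begin

lemma card_zero: "of_nat (card (UNIV :: 'a::{finite,comm_ring_1} set)) = (0::'a)"
proof -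
  have "(\<Sum>x\<in>UNIV. x + (1::'a)) = (\<Sum>x\<in>UNIV. x)"
    by (rule sum.reindex_bij_witness[where i="\<lambda>x. x - 1" and j="\<lambda>x. x + 1"]) auto
  then show ?thesis by (simp add: sum.distrib)
qed

lemma m_nz:
  assumes "coprime (card (UNIV :: 'a::{finite,field} set)) m"
  shows "of_nat m \<noteq> (0::'a)"
proof
  assume h: "of_nat m = (0::'a)"
  define c where "c = card (UNIV :: 'a set)"
  have c0: "c \<noteq> 0" unfolding c_def by simp
  have g1: "gcd c m = 1" using assms unfolding c_def by (simp only: coprime_iff_gcd_eq_1)
  obtain a b where "c * a = m * b + gcd c m" using bezout_nat[OF c0, of m] by blast
  hence eq: "a * c = b * m + 1" using g1 by (simp add: mult.commute)
  have "(of_nat (a * c) :: 'a) = of_nat (b*m + 1)" by (rule arg_cong[OF eq])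
  hence "of_nat a * of_nat c = of_nat b * of_nat m + (1::'a)" by (simp only: of_nat_mult of_nat_add of_nat_1)
  hence "of_nat a * 0 = of_nat b * 0 + (1::'a)" by (simp only: h card_zero c_def)
  thus False by simp
qed

lemma reflect_xm1:
  assumes "m \<ge> 1"
  shows "reflect_poly (monom (1::'a::field) m - 1) = - (monom 1 m - 1)"
proof -
  have e: "monom (1::'a) m - 1 = monom 1 m + (- 1)" by simp
  have d: "degree (monom (1::'a) m - 1) = m" unfolding e using assms
    by (subst degree_add_eq_left) (auto simp: degree_monom_eq)
  show ?thesis
    by (rule poly_eqI) (auto simp: coeff_reflect_poly d coeff_monom)
qed

lemma rr_dvd: "reflect_poly (reflect_poly (f::'a::field poly)) dvd f"
proof (cases "f = 0")
  case False
  obtain q where q: "f = [:- 0, 1:] ^ order 0 f * q" "\<not> [:- 0, 1:] dvd q"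
    using order_decomp[OF False] by blast
  have c: "coeff q 0 \<noteq> 0" using q(2) by (simp add: dvd_iff_poly_eq_0 poly_0_coeff_0)
  have rx: "reflect_poly [:0, 1::'a:] = 1" by (simp add: reflect_poly_def)
  have "reflect_poly f = reflect_poly q" 
    by (subst q(1)) (simp add: reflect_poly_mult reflect_poly_power rx)
  hence "reflect_poly (reflect_poly f) = q" using c by simp
  thus ?thesis by (metis dvd_triv_right q(1))
qed simp

lemma reflect_dvd: "p dvd q \<Longrightarrow> reflect_poly p dvd reflect_poly (q::'a::field poly)"
  by (metis dvd_def reflect_poly_mult)

lemma sqfree_xm1:
  fixes p :: "'a::{field_gcd,finite} poly"
  assumes "m \<ge> 1" "coprime (card (UNIV :: 'a set)) m" "prime p"
  shows "\<not> p * p dvd monom 1 m - 1"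
proof
  assume h: "p * p dvd monom 1 m - 1"
  then obtain r where r: "monom 1 m - 1 = p * p * r" by blast
  have "pderiv (monom (1::'a) m - 1) = p * (p * pderiv r + 2 * r * pderiv p)"
    by (subst r) (simp add: pderiv_mult algebra_simps)
  hence d1: "p dvd pderiv (monom (1::'a) m - 1)" by simp
  have "pderiv (monom (1::'a) m - 1) = monom (of_nat m) (m - 1)"
    by (simp add: pderiv_diff pderiv_monom)
  also have "\<dots> = [:of_nat m:] * [:0,1:] ^ (m - 1)" by (simp add: monom_altdef)
  finally have "p dvd [:of_nat m:] * [:0,1:] ^ (m - 1)" using d1 by simp
  moreover have "is_unit [:of_nat m :: 'a:]" using m_nz[OF assms(2)] is_unit_iff_degree[of "[:of_nat m :: 'a:]"] by simp
  ultimately have "p dvd [:0,1:] ^ (m - 1)" using dvd_mult_unit_iff'[of "[:of_nat m :: 'a:]" p] by simp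
  hence "p dvd [:0,1:] ^ (m-1) * [:0,1:]" by (rule dvd_mult2)
  also have "\<dots> = [:0,1:] ^ m" using assms(1) by (subst power_Suc2[symmetric]) simp
  also have "\<dots> = monom 1 m" by (simp add: monom_altdef)
  finally have "p dvd monom 1 m - (monom 1 m - 1)" using h dvd_mult_left dvd_diff by blast
  hence "p dvd 1" by simp
  thus False using assms(3) by (simp add: prime_def prime_elem_def)
qed


lemma coeff0_nz:
  fixes q :: "'a::field poly"
  assumes "q dvd monom 1 m - 1" "m \<ge> 1"
  shows "coeff q 0 \<noteq> 0"
proof
  assume "coeff q 0 = 0"
  then have "poly q 0 = 0" by (simp add: poly_0_coeff_0)
  moreover obtain r where "monom 1 m - 1 = q * r" using assms by blast
  hence "poly (monom 1 m - 1) 0 = poly q 0 * poly r 0" by simp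
  ultimately have "poly (monom (1::'a) m - 1) 0 = 0" by simp
  thus False using assms(2) by (cases m) (auto simp: poly_monom)
qed

lemma nonunit_reflect:
  fixes q :: "'a::field poly"
  assumes "q dvd monom 1 m - 1" "m \<ge> 1" "\<not> is_unit q"
  shows "\<not> is_unit (reflect_poly q)" "reflect_poly q \<noteq> 0"
proof -
  have c: "coeff q 0 \<noteq> 0" using coeff0_nz[OF assms(1,2)] .
  hence q0: "q \<noteq> 0" by auto
  have "degree q \<noteq> 0" using assms(3) q0 is_unit_iff_degree by blast
  moreover have "degree (reflect_poly q) = degree q" using c by simp
  moreover have r0: "reflect_poly q \<noteq> 0" using q0 by simp
  ultimately show "\<not> is_unit (reflect_poly q)" "reflect_poly q \<noteq> 0" using is_unit_iff_degree[OF r0] by auto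
qed

lemma lemC:
  fixes p Q :: "'a::field_gcd poly"
  assumes "m \<ge> 1" "prime p" "prime Q" "p dvd monom 1 m - 1" "Q dvd monom 1 m - 1"
    "Q dvd reflect_poly p"
  shows "p dvd reflect_poly Q"
proof -
  have "reflect_poly Q dvd reflect_poly (reflect_poly p)" using reflect_dvd[OF assms(6)] .
  also have "reflect_poly (reflect_poly p) = p" using coeff0_nz[OF assms(4,1)] by simp
  finally have "reflect_poly Q dvd p" .
  moreover have "\<not> is_unit (reflect_poly Q)"
    using nonunit_reflect[OF assms(5,1)] assms(3) by (simp add: prime_def prime_elem_def)
  moreover have "irreducible p" using assms(2) by (simp add: prime_elem_imp_irreducible)
  ultimately show ?thesis using irreducibleD' by blast
qed

theorem lemma4p2:
  fixes g11 g12 :: "'a::{field_gcd, finite} poly" and m :: nat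
  assumes "m \<ge> 1"
    and "coprime (card (UNIV :: 'a set)) m"
    and "g11 dvd (monom 1 m - 1)"
    and "degree g12 < m"
  defines "g \<equiv> gcd g11 g12"
  defines "g11' \<equiv> g11 div g"
  defines "g22 \<equiv> (monom 1 m - 1) div g11'"
  defines "g22' \<equiv> g22 div g"
  defines "r22 \<equiv> gcd g22' (reflect_poly g22')"
  defines "t22 \<equiv> g22' div r22"
  assumes "self_reciprocal g"
    and "gcd t22 g12 = 1"
  shows "gcd g11' (g11 * bar_poly m g11 + g12 * bar_poly m g12) = 1"
proof -
  define X :: "'a poly" where "X = monom 1 m - 1"
  have "poly X 0 = -1" using assms(1) by (cases m) (auto simp: X_def poly_monom)
  hence X0: "X \<noteq> 0" by auto
  obtain k where k: "X = g11 * k" using assms(3) X_def by blast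
  have g11nz: "g11 \<noteq> 0" using X0 k by auto
  have gnz: "g \<noteq> 0" using g11nz g_def by simp
  have g11e: "g11 = g * g11'" unfolding g11'_def g_def by simp
  have g11'nz: "g11' \<noteq> 0" using g11nz g11e by auto
  have "X = g11' * (g * k)" using k g11e by (simp add: ac_simps)
  hence "g22 = g * k" unfolding g22_def X_def[symmetric] using g11'nz by simp
  hence g22'e: "g22' = k" unfolding g22'_def using gnz by simp
  have Xe: "X = g11' * g * g22'" using k g11e g22'e by (simp add: ac_simps)
  have sq: "\<And>q. prime q \<Longrightarrow> \<not> q * q dvd X" unfolding X_def using sqfree_xm1 assms(1,2) by blast
  have A: "\<And>q. prime q \<Longrightarrow> q dvd g \<Longrightarrow> q dvd g11' \<Longrightarrow> False"
  proof -
    fix q assume "prime q" "q dvd g" "q dvd g11'"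
    hence "q * q dvd g * g11'" by (intro mult_dvd_mono)
    moreover have "g * g11' dvd X" unfolding Xe by (simp add: ac_simps)
    ultimately have "q * q dvd X" by (rule dvd_trans)
    thus False using sq \<open>prime q\<close> by blast
  qed
  have B: "\<And>q. prime q \<Longrightarrow> q dvd g22' \<Longrightarrow> q dvd g11' \<Longrightarrow> False"
  proof -
    fix q assume "prime q" "q dvd g22'" "q dvd g11'"
    hence "q * q dvd g11' * g22'" by (intro mult_dvd_mono)
    moreover have "g11' * g22' dvd X" unfolding Xe by (simp add: ac_simps)
    ultimately have "q * q dvd X" by (rule dvd_trans)
    thus False using sq \<open>prime q\<close> by blast
  qed
  have g11'X: "g11' dvd X" unfolding Xe by simp
  from assms(11) obtain \<alpha> where alpha: "reflect_poly g = smult \<alpha> g" unfolding self_reciprocal_def by blast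
  have anz: "\<alpha> \<noteq> 0" using alpha gnz by auto
  have core: "\<And>p. prime p \<Longrightarrow> p dvd g11' \<Longrightarrow> p dvd (g11 * bar_poly m g11 + g12 * bar_poly m g12) \<Longrightarrow> False"
  proof -
    fix p :: "'a poly"
    assume p: "prime p" "p dvd g11'" "p dvd (g11 * bar_poly m g11 + g12 * bar_poly m g12)"
    have pX: "p dvd X" using p(2) g11'X by (rule dvd_trans)
    have "p dvd g11" using p(2) g11e by simp
    hence "p dvd g11 * bar_poly m g11" by simp
    hence "p dvd g12 * bar_poly m g12" using p(3) by (simp add: dvd_add_right_iff)
    hence "p dvd g12 \<or> p dvd monom 1 (m - degree g12) \<or> p dvd reflect_poly g12"
      using p(1) by (simp add: bar_poly_def prime_dvd_mult_iff)
    moreover have "\<not> p dvd g12"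
    proof
      assume "p dvd g12" with \<open>p dvd g11\<close> have "p dvd g" unfolding g_def by simp
      thus False using A p by blast
    qed
    moreover have "\<not> p dvd monom 1 (m - degree g12)"
    proof
      assume "p dvd monom 1 (m - degree g12)"
      hence "p dvd [:0,1:] ^ (m - degree g12)" by (simp add: monom_altdef)
      hence "p dvd [:0,1:]" using p(1) by (rule prime_dvd_power[rotated])
      moreover have "[:0,1:] dvd ([:0,1::'a:] ^ m)" using assms(1) by (intro dvd_power) simp
      ultimately have "p dvd [:0,1:] ^ m" by (rule dvd_trans)
      hence "p dvd monom 1 m" by (simp add: monom_altdef)
      hence "p dvd monom 1 m - X" using pX by (rule dvd_diff)
      hence "p dvd 1" by (simp add: X_def)
      thus False using p(1) by (simp add: prime_def prime_elem_def)
    qed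
    moreover have "\<not> p dvd reflect_poly g12"
    proof
      assume pr: "p dvd reflect_poly g12"
      have pnu: "\<not> is_unit p" using p(1) by (simp add: prime_def prime_elem_def)
      obtain Q where Q: "Q dvd reflect_poly p" "prime Q"
        using prime_divisor_exists[of "reflect_poly p"] nonunit_reflect[of p m] pX pnu assms(1) X_def by blast
      have "Q dvd reflect_poly (reflect_poly g12)" using Q(1) reflect_dvd[OF pr] by (rule dvd_trans)
      hence Qg12: "Q dvd g12" using rr_dvd by (rule dvd_trans)
      have "Q dvd reflect_poly X" using Q(1) reflect_dvd[OF pX] by (rule dvd_trans)
      moreover have "reflect_poly X = - X" unfolding X_def by (rule reflect_xm1[OF assms(1)])
      ultimately have QX: "Q dvd X" by simp
      have pQ: "p dvd reflect_poly Q" using lemC[OF assms(1) p(1) Q(2)] pX QX Q(1) X_def by blast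
      have "Q dvd g11' \<or> Q dvd g \<or> Q dvd g22'" using QX Xe Q(2) by (simp add: prime_dvd_mult_iff)
      moreover have "\<not> Q dvd g11'"
      proof
        assume "Q dvd g11'"
        hence "Q dvd g11" using g11e by simp
        hence "Q dvd g" using Qg12 unfolding g_def by simp
        thus False using A Q(2) \<open>Q dvd g11'\<close> by blast
      qed
      moreover have "\<not> Q dvd g"
      proof
        assume "Q dvd g"
        hence "reflect_poly Q dvd smult \<alpha> g" using reflect_dvd[of Q g] alpha by simp
        hence "reflect_poly Q dvd g" using anz dvd_smult_cancel by blast
        hence "p dvd g" using pQ dvd_trans by blast
        thus False using A p by blast
      qed
      moreover have "\<not> Q dvd g22'"
      proof
        assume Qg: "Q dvd g22'"
        have "\<not> Q dvd t22"
        proof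
          assume "Q dvd t22" hence "Q dvd gcd t22 g12" using Qg12 by simp
          thus False using assms(12) Q(2) by (simp add: prime_def prime_elem_def)
        qed
        moreover have "g22' = t22 * r22" unfolding t22_def r22_def by simp
        ultimately have "Q dvd r22" using Qg Q(2) by (simp add: prime_dvd_mult_iff)
        hence "Q dvd reflect_poly g22'" unfolding r22_def by (rule dvd_trans) simp
        hence "reflect_poly Q dvd reflect_poly (reflect_poly g22')" by (rule reflect_dvd)
        hence "reflect_poly Q dvd g22'" using rr_dvd by (rule dvd_trans)
        hence "p dvd g22'" using pQ dvd_trans by blast
        thus False using B p by blast
      qed
      ultimately show False by blast
    qed
    ultimately show False by blast
  qed
  show ?thesis
  proof (rule ccontr)
    let ?S = "g11 * bar_poly m g11 + g12 * bar_poly m g12"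
    assume ne: "gcd g11' ?S \<noteq> 1"
    have "\<not> is_unit (gcd g11' ?S)"
    proof
      assume "is_unit (gcd g11' ?S)"
      hence "normalize (gcd g11' ?S) = 1" by (rule is_unit_normalize)
      thus False using ne by simp
    qed
    moreover have "gcd g11' ?S \<noteq> 0" using g11'nz by simp
    ultimately obtain p where "p dvd gcd g11' ?S" "prime p" using prime_divisor_exists by blast
    thus False using core by auto
  qed
qed

end
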